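(* Let ${\mathbf{X}}\in\mathbb{R}_+^{m\times n}$, let ${\mathbf{A}}\in\mathbb{R}^{k\times m}$ be arbitrary, let $\lambda\in[0,1]$ and $\sigma\ge\max_{a,b}\big(({\mathbf{A}}^T{\mathbf{A}})_{ab}\big)_-$. Then for entrywise nonnegative ${\mathbf{U}}\in\mathbb{R}^{m\times r}$, ${\mathbf{V}}\in\mathbb{R}^{n\times r}$ (with denominators below entrywise positive), the objective $$\|{\mathbf{A}}({\mathbf{X}}-{\mathbf{U}}{\mathbf{V}}^T)\|_F^2+\lambda\|{\mathbf{U}}{\mathbf{V}}^T\|_F^2+\sigma\|\mathbf{1}^T({\mathbf{X}}-{\mathbf{U}}{\mathbf{V}}^T)\|_2^2$$ does not increase under each of the updates $${\mathbf{U}}\leftarrow{\mathbf{U}}\circ\frac{{\mathbf{A}}^T{\mathbf{A}}{\mathbf{X}}{\mathbf{V}}+\sigma\mathbf{1}\mathbf{1}^T{\mathbf{X}}{\mathbf{V}}}{{\mathbf{A}}^T{\mathbf{A}}{\mathbf{U}}{\mathbf{V}}^T{\mathbf{V}}+\sigma\mathbf{1}\mathbf{1}^T{\mathbf{U}}{\mathbf{V}}^T{\mathbf{V}}+\lambda{\mathbf{U}}{\mathbf{V}}^T{\mathbf{V}}},\qquad {\mathbf{V}}\leftarrow{\mathbf{V}}\circ\frac{{\mathbf{X}}^T{\mathbf{A}}^T{\mathbf{A}}{\mathbf{U}}+\sigma{\mathbf{X}}^T\mathbf{1}\mathbf{1}^T{\mathbf{U}}}{{\mathbf{V}}{\mathbf{U}}^T{\mathbf{A}}^T{\mathbf{A}}{\mathbf{U}}+\sigma{\mathbf{V}}{\mathbf{U}}^T\mathbf{1}\mathbf{1}^T{\mathbf{U}}+\lambda{\mathbf{V}}{\mathbf{U}}^T{\mathbf{U}}},$$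 and the updated factors remain entrywise nonnegative.
   Context: $\mathbf{1}\in\mathbb{R}^m$ is the all-ones vector; $(x)_-=-\min(x,0)$; $\circ$ is entrywise product and the fraction bar is entrywise division; $\mathbb{R}_+^{m\times n}$ denotes entrywise nonnegative matrices. $\|\cdot\|_F$ is the Frobenius norm, $\|\cdot\|_2$ the Euclidean norm. *)

theory Defs
  imports "HOL-Analysis.Analysis"
begin

text \<open>Matrices are Cartesian-product types: an m-by-n real matrix is real^'n^'m
  (rows indexed by 'm, columns by 'n).\<close>

definition negpart :: "real \<Rightarrow> real" where
  "negpart x = - min x 0"

definition ones :: "real^'m" where
  "ones = (\<chi> i. 1)"

definition frob_sq :: "real^'n^'m \<Rightarrow> real" where
  "frob_sq M = (\<Sum>i\<in>UNIV. \<Sum>j\<in>UNIV. (M $ i $ j)^2)"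

definition had :: "real^'n^'m \<Rightarrow> real^'n^'m \<Rightarrow> real^'n^'m" where
  "had M N = (\<chi> i j. M $ i $ j * N $ i $ j)"

definition ediv :: "real^'n^'m \<Rightarrow> real^'n^'m \<Rightarrow> real^'n^'m" where
  "ediv M N = (\<chi> i j. M $ i $ j / N $ i $ j)"

definition nonneg_mat :: "real^'n^'m \<Rightarrow> bool" where
  "nonneg_mat M \<longleftrightarrow> (\<forall>i j. 0 \<le> M $ i $ j)"

definition pos_mat :: "real^'n^'m \<Rightarrow> bool" where
  "pos_mat M \<longleftrightarrow> (\<forall>i j. 0 < M $ i $ j)"

definition J :: "real^'m^'m" where
  "J = (\<chi> i j. 1)"

definition objective ::
  "real^'m^'k \<Rightarrow> real^'n^'m \<Rightarrow> real \<Rightarrow> real \<Rightarrow> real^'r^'m \<Rightarrow> real^'r^'n \<Rightarrow> real" where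
  "objective A X lam sig U V =
     frob_sq (A ** (X - U ** transpose V))
     + lam * frob_sq (U ** transpose V)
     + sig * (norm (ones v* (X - U ** transpose V)))^2"

definition U_num :: "real^'m^'k \<Rightarrow> real^'n^'m \<Rightarrow> real \<Rightarrow> real \<Rightarrow> real^'r^'m \<Rightarrow> real^'r^'n \<Rightarrow> real^'r^'m" where
  "U_num A X lam sig U V = transpose A ** A ** X ** V + sig *\<^sub>R (J ** X ** V)"

definition U_den :: "real^'m^'k \<Rightarrow> real^'n^'m \<Rightarrow> real \<Rightarrow> real \<Rightarrow> real^'r^'m \<Rightarrow> real^'r^'n \<Rightarrow> real^'r^'m" where
  "U_den A X lam sig U V =
     transpose A ** A ** U ** transpose V ** V + sig *\<^sub>R (J ** U ** transpose V ** V)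
     + lam *\<^sub>R (U ** transpose V ** V)"

definition V_num :: "real^'m^'k \<Rightarrow> real^'n^'m \<Rightarrow> real \<Rightarrow> real \<Rightarrow> real^'r^'m \<Rightarrow> real^'r^'n \<Rightarrow> real^'r^'n" where
  "V_num A X lam sig U V = transpose X ** transpose A ** A ** U + sig *\<^sub>R (transpose X ** J ** U)"

definition V_den :: "real^'m^'k \<Rightarrow> real^'n^'m \<Rightarrow> real \<Rightarrow> real \<Rightarrow> real^'r^'m \<Rightarrow> real^'r^'n \<Rightarrow> real^'r^'n" where
  "V_den A X lam sig U V =
     V ** transpose U ** transpose A ** A ** U + sig *\<^sub>R (V ** transpose U ** J ** U)
     + lam *\<^sub>R (V ** transpose U ** U)"

definition U_update where
  "U_update A X lam sig U V = had U (ediv (U_num A X lam sig U V) (U_den A X lam sig U V))"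

definition V_update where
  "V_update A X lam sig U V = had V (ediv (V_num A X lam sig U V) (V_den A X lam sig U V))"

end

theory Submission
  imports Defs
begin


definition ip :: "real^'n^'m \<Rightarrow> real^'n^'m \<Rightarrow> real" where
  "ip P Q = (\<Sum>i\<in>UNIV. \<Sum>j\<in>UNIV. P$i$j * Q$i$j)"

lemma ip_comm: "ip P Q = ip Q P"
  by (simp add: ip_def mult.commute)
lemma ip_add_l: "ip (P + Q) R = ip P R + ip Q R"
  by (simp add: ip_def algebra_simps sum.distrib)
lemma ip_diff_l: "ip (P - Q) R = ip P R - ip Q R"
  by (simp add: ip_def algebra_simps sum_subtractf)
lemma ip_scale_l: "ip (c *\<^sub>R P) R = c * ip P R"
  by (simp add: ip_def sum_distrib_left mult.assoc)
lemma ip_add_r: "ip R (P + Q) = ip R P + ip R Q"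
  by (metis ip_comm ip_add_l)
lemma ip_diff_r: "ip R (P - Q) = ip R P - ip R Q"
  by (metis ip_comm ip_diff_l)
lemma ip_scale_r: "ip R (c *\<^sub>R P) = c * ip R P"
  by (metis ip_comm ip_scale_l)

lemma ip_mm_l: "ip (A ** P) Q = ip P (transpose A ** Q)"
proof -
  have "ip (A ** P) Q = (\<Sum>i\<in>UNIV. \<Sum>j\<in>UNIV. \<Sum>k\<in>UNIV. A$i$k * P$k$j * Q$i$j)"
    by (simp add: ip_def matrix_matrix_mult_def sum_distrib_right)
  also have "\<dots> = (\<Sum>j\<in>UNIV. \<Sum>i\<in>UNIV. \<Sum>k\<in>UNIV. A$i$k * P$k$j * Q$i$j)" by (rule sum.swap)
  also have "\<dots> = (\<Sum>j\<in>UNIV. \<Sum>k\<in>UNIV. \<Sum>i\<in>UNIV. A$i$k * P$k$j * Q$i$j)" by (rule sum.cong[OF refl], rule sum.swap)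
  also have "\<dots> = (\<Sum>k\<in>UNIV. \<Sum>j\<in>UNIV. \<Sum>i\<in>UNIV. A$i$k * P$k$j * Q$i$j)" by (rule sum.swap)
  also have "\<dots> = ip P (transpose A ** Q)"
    by (simp add: ip_def matrix_matrix_mult_def transpose_def sum_distrib_left mult_ac)
  finally show ?thesis .
qed

lemma ip_mm_r: "ip (P ** B) Q = ip P (Q ** transpose B)"
proof -
  have "ip (P ** B) Q = (\<Sum>i\<in>UNIV. \<Sum>j\<in>UNIV. \<Sum>k\<in>UNIV. P$i$k * B$k$j * Q$i$j)"
    by (simp add: ip_def matrix_matrix_mult_def sum_distrib_right)
  also have "\<dots> = (\<Sum>i\<in>UNIV. \<Sum>k\<in>UNIV. \<Sum>j\<in>UNIV. P$i$k * B$k$j * Q$i$j)" by (rule sum.cong[OF refl], rule sum.swap)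
  also have "\<dots> = ip P (Q ** transpose B)"
    by (simp add: ip_def matrix_matrix_mult_def transpose_def sum_distrib_left mult_ac)
  finally show ?thesis .
qed

lemma ip_tr: "ip (transpose P) (transpose Q) = ip P Q"
  by (simp add: ip_def transpose_def, rule sum.swap)

lemma frob_ip: "frob_sq P = ip P P"
  by (simp add: frob_sq_def ip_def power2_eq_square)

lemma norm_ones: "(norm (ones v* P))^2 = ip (J ** P) P"
proof -
  have "(norm (ones v* P))^2 = (\<Sum>j\<in>UNIV. (\<Sum>i\<in>UNIV. P$i$j) * (\<Sum>k\<in>UNIV. P$k$j))"
    by (simp add: power2_norm_eq_inner inner_vec_def vector_matrix_mult_def ones_def)
  also have "\<dots> = (\<Sum>j\<in>UNIV. \<Sum>i\<in>UNIV. (\<Sum>k\<in>UNIV. P$k$j) * P$i$j)"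
    by (simp add: sum_distrib_right mult.commute)
  also have "\<dots> = ip (J ** P) P"
    by (simp add: ip_def matrix_matrix_mult_def J_def, rule sum.swap)
  finally show ?thesis .
qed

lemma mm_add_r: "((A::real^'n^'m) + B) ** C = A ** C + B ** C"
  by (simp add: matrix_matrix_mult_def vec_eq_iff algebra_simps sum.distrib)
lemma mm_diff_r: "((A::real^'n^'m) - B) ** C = A ** C - B ** C"
  by (simp add: matrix_matrix_mult_def vec_eq_iff algebra_simps sum_subtractf)
lemma mm_diff_l: "(A::real^'n^'m) ** (B - C) = A ** B - A ** C"
  by (simp add: matrix_matrix_mult_def vec_eq_iff algebra_simps sum_subtractf)
lemma mm_scale_l: "(c *\<^sub>R (A::real^'n^'m)) ** B = c *\<^sub>R (A ** B)"
  by (simp add: scalar_matrix_assoc)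
lemma mm_scale_r: "(A::real^'n^'m) ** (c *\<^sub>R B) = c *\<^sub>R (A ** B)"
  by (simp add: matrix_scalar_ac scalar_matrix_assoc)
lemma tr_add: "transpose ((A::real^'n^'m) + B) = transpose A + transpose B"
  by (simp add: transpose_def vec_eq_iff)
lemma tr_diff: "transpose ((A::real^'n^'m) - B) = transpose A - transpose B"
  by (simp add: transpose_def vec_eq_iff)



lemma amgm_term:
  fixes C dp dq up uq :: real
  assumes "C \<ge> 0" "up \<ge> 0" "uq \<ge> 0" "up = 0 \<longrightarrow> dp = 0" "uq = 0 \<longrightarrow> dq = 0"
  shows "C * dp * dq \<le> C * (dp^2 * uq / up) / 2 + C * (dq^2 * up / uq) / 2"
proof (cases "up = 0 \<or> uq = 0")
  case True then show ?thesis using assms by auto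
next
  case False
  then have p: "up > 0" "uq > 0" using assms by auto
  have "dp * dq \<le> (dp^2 * uq / up) / 2 + (dq^2 * up / uq) / 2"
  proof -
    have "0 \<le> (dp * uq - dq * up)^2 / (2 * up * uq)" using p by simp
    also have "\<dots> = (dp^2 * uq / up) / 2 + (dq^2 * up / uq) / 2 - dp * dq"
      using p by (simp add: field_simps power2_eq_square)
    finally show ?thesis by simp
  qed
  from mult_left_mono[OF this assms(1)] show ?thesis by (simp add: algebra_simps)
qed

lemma key_abs:
  fixes C :: "'p::finite \<Rightarrow> 'p \<Rightarrow> real" and u d :: "'p \<Rightarrow> real"
  assumes C0: "\<And>p q. C p q \<ge> 0" and Cs: "\<And>p q. C p q = C q p"
    and u0: "\<And>p. u p \<ge> 0" and ud: "\<And>p. u p = 0 \<Longrightarrow> d p = 0"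
  shows "(\<Sum>p\<in>UNIV. \<Sum>q\<in>UNIV. C p q * d p * d q) \<le> (\<Sum>p\<in>UNIV. d p^2 * (\<Sum>q\<in>UNIV. C p q * u q) / u p)"
proof -
  have "(\<Sum>p\<in>UNIV. \<Sum>q\<in>UNIV. C p q * d p * d q) \<le>
     (\<Sum>p\<in>UNIV. \<Sum>q\<in>UNIV. C p q * (d p^2 * u q / u p) / 2 + C p q * (d q^2 * u p / u q) / 2)"
    by (intro sum_mono amgm_term) (auto simp: C0 u0 ud)
  also have "\<dots> = (\<Sum>p\<in>UNIV. \<Sum>q\<in>UNIV. C p q * (d p^2 * u q / u p) / 2) + (\<Sum>p\<in>UNIV. \<Sum>q\<in>UNIV. C p q * (d q^2 * u p / u q) / 2)"
    by (simp add: sum.distrib)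
  also have "(\<Sum>p\<in>UNIV. \<Sum>q\<in>UNIV. C p q * (d q^2 * u p / u q) / 2) = (\<Sum>q\<in>UNIV. \<Sum>p\<in>UNIV. C p q * (d q^2 * u p / u q) / 2)"
    by (rule sum.swap)
  also have "\<dots> = (\<Sum>p\<in>UNIV. \<Sum>q\<in>UNIV. C p q * (d p^2 * u q / u p) / 2)"
    using Cs by simp
  also have "(\<Sum>p\<in>UNIV. \<Sum>q\<in>UNIV. C p q * (d p^2 * u q / u p) / 2) + (\<Sum>p\<in>UNIV. \<Sum>q\<in>UNIV. C p q * (d p^2 * u q / u p) / 2)
     = (\<Sum>p\<in>UNIV. d p^2 * (\<Sum>q\<in>UNIV. C p q * u q) / u p)"
    by (simp add: sum.distrib[symmetric] sum_distrib_left sum_divide_distrib mult_ac)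
  finally show ?thesis .
qed

lemma sum_pair: "(\<Sum>p\<in>(UNIV::('a::finite \<times> 'b::finite) set). f p) = (\<Sum>a\<in>UNIV. \<Sum>b\<in>UNIV. f (a, b))"
  by (simp add: sum.cartesian_product UNIV_Times_UNIV[symmetric] del: UNIV_Times_UNIV)

lemma key_mat:
  fixes M :: "real^'m^'m" and W :: "real^'r^'r" and D U :: "real^'r^'m"
  assumes "nonneg_mat M" "nonneg_mat W" "transpose M = M" "transpose W = W"
    "nonneg_mat U" "\<And>a i. U$a$i = 0 \<Longrightarrow> D$a$i = 0"
  shows "ip (M ** D ** W) D \<le> (\<Sum>a\<in>UNIV. \<Sum>i\<in>UNIV. (D$a$i)^2 * (M ** U ** W)$a$i / U$a$i)"
proof -
  define C :: "'m \<times> 'r \<Rightarrow> 'm \<times> 'r \<Rightarrow> real" where "C p q = M $ fst p $ fst q * W $ snd q $ snd p" for p q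
  define d where "d p = D $ fst p $ snd p" for p
  define u where "u p = U $ fst p $ snd p" for p
  have Ms: "M$a$b = M$b$a" for a b using assms(3) by (metis transpose_def vec_lambda_beta)
  have Ws: "W$a$b = W$b$a" for a b using assms(4) by (metis transpose_def vec_lambda_beta)
  have mmm: "(M ** Y ** W)$a$i = (\<Sum>b\<in>UNIV. \<Sum>j\<in>UNIV. M$a$b * W$j$i * Y$b$j)" for Y :: "real^'r^'m" and a i
  proof -
    have "(M ** Y ** W)$a$i = (\<Sum>j\<in>UNIV. \<Sum>b\<in>UNIV. M$a$b * W$j$i * Y$b$j)"
      by (simp add: matrix_matrix_mult_def sum_distrib_left sum_distrib_right mult_ac)
    also have "\<dots> = (\<Sum>b\<in>UNIV. \<Sum>j\<in>UNIV. M$a$b * W$j$i * Y$b$j)" by (rule sum.swap)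
    finally show ?thesis .
  qed
  have "ip (M ** D ** W) D = (\<Sum>p\<in>UNIV. \<Sum>q\<in>UNIV. C p q * d p * d q)"
    by (simp add: ip_def mmm sum_pair C_def d_def sum_distrib_left mult_ac)
  also have "\<dots> \<le> (\<Sum>p\<in>UNIV. d p^2 * (\<Sum>q\<in>UNIV. C p q * u q) / u p)"
    by (rule key_abs) (use assms Ms Ws in \<open>auto simp: C_def u_def d_def nonneg_mat_def\<close>)
  also have "\<dots> = (\<Sum>a\<in>UNIV. \<Sum>i\<in>UNIV. (D$a$i)^2 * (M ** U ** W)$a$i / U$a$i)"
    by (simp add: mmm sum_pair C_def d_def u_def)
  finally show ?thesis .
qed



definition Gm :: "real^'m^'k \<Rightarrow> real \<Rightarrow> real^'m^'m" where
  "Gm A sig = transpose A ** A + sig *\<^sub>R J"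

lemma J_tr: "transpose J = J"
  by (simp add: transpose_def J_def)

lemma Gm_sym: "transpose (Gm A sig) = Gm A sig"
  by (simp add: Gm_def tr_add transpose_scalar matrix_transpose_mul J_tr)

lemma ip_sym: "transpose G = G \<Longrightarrow> ip (G ** Y) X = ip (G ** X) Y"
  by (metis ip_mm_l ip_comm)

lemma obj_eq: "objective A X lam sig U V =
   ip (Gm A sig ** (X - U ** transpose V)) (X - U ** transpose V) + lam * ip (U ** transpose V) (U ** transpose V)"
proof -
  define E where "E = X - U ** transpose V"
  have "frob_sq (A ** E) = ip ((transpose A ** A) ** E) E"
    unfolding frob_ip by (subst ip_mm_l) (simp add: matrix_mul_assoc ip_comm[of E "transpose A ** A ** E"])
  then show ?thesis
    unfolding objective_def E_def[symmetric]
    by (simp add: frob_ip norm_ones Gm_def mm_add_r mm_scale_l ip_add_l ip_scale_l)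
qed

lemma quad_expand:
  assumes "transpose G = G"
  shows "ip (G ** (X - (Z + Y))) (X - (Z + Y)) + lam * ip (Z + Y) (Z + Y) =
    ip (G ** (X - Z)) (X - Z) + lam * ip Z Z + 2 * ip (G ** Z + lam *\<^sub>R Z - G ** X) Y
    + (ip (G ** Y) Y + lam * ip Y Y)"
proof -
  have e: "X - (Z + Y) = X - Z - Y" by simp
  have s1: "ip (G ** Y) X = ip (G ** X) Y" "ip (G ** Y) Z = ip (G ** Z) Y" "ip Y Z = ip Z Y"
    using ip_sym[OF assms] ip_comm by auto
  show ?thesis unfolding e
    apply (simp only: mm_diff_l matrix_add_ldistrib ip_add_l ip_add_r ip_diff_l ip_diff_r ip_scale_l ip_scale_r s1)
    apply (simp add: algebra_simps)
    done
qed

lemma nn_mm: "nonneg_mat (P::real^'n^'m) \<Longrightarrow> nonneg_mat Q \<Longrightarrow> nonneg_mat (P ** Q)"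
  by (simp add: nonneg_mat_def matrix_matrix_mult_def sum_nonneg)

lemma nn_tr: "nonneg_mat (P::real^'n^'m) \<Longrightarrow> nonneg_mat (transpose P)"
  by (simp add: nonneg_mat_def transpose_def)

lemma nn_mat1: "nonneg_mat (mat 1 :: real^'n^'n)"
  by (simp add: nonneg_mat_def mat_def)

lemma ipYY: "transpose G = G \<Longrightarrow> ip (G ** (d ** B)) (d ** B) = ip (G ** d ** (B ** transpose B)) d"
proof -
  assume Gs: "transpose G = G"
  have "ip (G ** (d ** B)) (d ** B) = ip ((G ** d) ** B) (d ** B)" by (simp add: matrix_mul_assoc)
  also have "\<dots> = ip (G ** d) (d ** (B ** transpose B))" by (subst ip_mm_r) (simp add: matrix_mul_assoc)
  also have "\<dots> = ip (d ** (B ** transpose B)) (G ** d)" by (rule ip_comm)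
  also have "\<dots> = ip d ((G ** d) ** (B ** transpose B))"
    by (subst ip_mm_r) (simp add: matrix_transpose_mul)
  also have "\<dots> = ip (G ** d ** (B ** transpose B)) d" by (rule ip_comm)
  finally show ?thesis .
qed

lemma ipYY2: "transpose G = G \<Longrightarrow> ip (G ** (U ** transpose d)) (U ** transpose d) = ip (d ** (transpose U ** G ** U)) d"
proof -
  assume Gs: "transpose G = G"
  have "ip (G ** (U ** transpose d)) (U ** transpose d) = ip (transpose (G ** (U ** transpose d))) (transpose (U ** transpose d))"
    by (rule ip_tr[symmetric])
  also have "\<dots> = ip (d ** (transpose U ** G)) (d ** transpose U)"
    by (simp add: matrix_transpose_mul Gs matrix_mul_assoc)
  also have "\<dots> = ip d (d ** transpose U ** transpose (transpose U ** G))"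
    by (rule ip_mm_r)
  also have "\<dots> = ip (d ** (transpose U ** G ** U)) d"
    by (subst ip_comm) (simp add: matrix_transpose_mul Gs matrix_mul_assoc)
  finally show ?thesis .
qed

lemma arith_upd:
  fixes D N U :: real
  assumes "D > 0" "U \<ge> 0"
  shows "2 * ((D - N) * (U * (N / D) - U)) + (U * (N / D) - U)^2 * D / U \<le> 0"
proof (cases "U = 0")
  case True then show ?thesis by simp
next
  case False
  have "2 * ((D - N) * (U * (N / D) - U)) + (U * (N / D) - U)^2 * D / U = - (U * (N - D)^2 / D)"
    using False assms by (simp add: field_simps power2_eq_square)
  also have "\<dots> \<le> 0" using assms by simp
  finally show ?thesis .
qed



lemma common_facts:
  fixes A :: "real^'m^'k"
  assumes "sig \<ge> Max ((\<lambda>(a, b). negpart ((transpose A ** A) $ a $ b)) ` UNIV)"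
  shows "nonneg_mat (Gm A sig)" "sig \<ge> 0"
proof -
  have le: "negpart ((transpose A ** A) $ a $ b) \<le> sig" for a b
  proof -
    have "negpart ((transpose A ** A) $ a $ b) \<le> Max ((\<lambda>(a, b). negpart ((transpose A ** A) $ a $ b)) ` UNIV)"
      by (rule Max_ge) (auto intro: image_eqI[where x="(a,b)"])
    then show ?thesis using assms by linarith
  qed
  show "nonneg_mat (Gm A sig)"
    unfolding nonneg_mat_def Gm_def
  proof (intro allI)
    fix a b
    have "negpart ((transpose A ** A) $ a $ b) \<le> sig" by (rule le)
    then show "0 \<le> (transpose A ** A + sig *\<^sub>R J) $ a $ b"
      by (simp add: J_def negpart_def)
  qed
  show "sig \<ge> 0" using le[of undefined undefined] by (simp add: negpart_def)
qed

lemma U_part: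
  fixes X :: "real^'n^'m" and A :: "real^'m^'k"
    and U :: "real^'r^'m" and V :: "real^'r^'n"
    and lam sig :: real
  assumes X0: "nonneg_mat X" and l0: "0 \<le> lam"
    and Gnn: "nonneg_mat (Gm A sig)"
    and U0: "nonneg_mat U" and V0: "nonneg_mat V"
    and pd: "pos_mat (U_den A X lam sig U V)"
  shows "objective A X lam sig (U_update A X lam sig U V) V \<le> objective A X lam sig U V
            \<and> nonneg_mat (U_update A X lam sig U V)"
proof -
  define G where "G = Gm A sig"
  define Dn where "Dn = U_den A X lam sig U V"
  define Nm where "Nm = U_num A X lam sig U V"
  define U' where "U' = U_update A X lam sig U V"
  define d where "d = U' - U"
  define W where "W = transpose V ** V"
  define M where "M = G + lam *\<^sub>R mat 1"
  define Z where "Z = U ** transpose V"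
  have Gs: "transpose G = G" by (simp add: G_def Gm_sym)
  have Gn: "nonneg_mat G" using Gnn by (simp add: G_def)
  have Mn: "nonneg_mat M" using Gn l0 by (simp add: M_def nonneg_mat_def mat_def)
  have Ms: "transpose M = M" by (simp add: M_def tr_add transpose_scalar Gs)
  have Wn: "nonneg_mat W" by (simp add: W_def nn_mm nn_tr V0)
  have Ws: "transpose W = W" by (simp add: W_def matrix_transpose_mul)
  have Nm_eq: "Nm = G ** X ** V"
    by (simp add: Nm_def U_num_def G_def Gm_def mm_add_r mm_scale_l matrix_mul_assoc)
  have Dn_eq: "Dn = M ** U ** W"
    by (simp add: Dn_def U_den_def M_def G_def Gm_def W_def mm_add_r mm_scale_l matrix_mul_assoc)
  have Nn: "nonneg_mat Nm" by (simp add: Nm_eq nn_mm Gn X0 V0)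
  have U'e: "U'$a$i = U$a$i * (Nm$a$i / Dn$a$i)" for a i
    by (simp add: U'_def U_update_def had_def ediv_def Nm_def Dn_def)
  have de: "d$a$i = U$a$i * (Nm$a$i / Dn$a$i) - U$a$i" for a i
    by (simp add: d_def U'e)
  have Dp: "Dn$a$i > 0" for a i using pd by (simp add: Dn_def pos_mat_def)
  have U'n: "nonneg_mat U'"
    using U0 Nn Dp unfolding nonneg_mat_def U'e by (meson divide_nonneg_pos mult_nonneg_nonneg)
  have dz: "U$a$i = 0 \<Longrightarrow> d$a$i = 0" for a i by (simp add: de)
  have UV: "U' ** transpose V = Z + d ** transpose V"
    by (simp add: d_def Z_def mm_add_r[symmetric])
  have obj: "objective A X lam sig U' V = objective A X lam sig U V
      + 2 * ip (G ** Z + lam *\<^sub>R Z - G ** X) (d ** transpose V)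
      + (ip (G ** (d ** transpose V)) (d ** transpose V) + lam * ip (d ** transpose V) (d ** transpose V))"
    unfolding obj_eq UV G_def[symmetric] Z_def[symmetric] quad_expand[OF Gs] by simp
  have PV: "(G ** Z + lam *\<^sub>R Z - G ** X) ** V = Dn - Nm"
    by (simp add: Dn_eq Nm_eq M_def W_def Z_def mm_add_r mm_diff_r mm_scale_l matrix_mul_assoc)
  have lin: "ip (G ** Z + lam *\<^sub>R Z - G ** X) (d ** transpose V) = ip (Dn - Nm) d"
    by (subst ip_comm, subst ip_mm_r) (simp add: PV ip_comm)
  have q1: "ip (G ** (d ** transpose V)) (d ** transpose V) = ip (G ** d ** W) d"
    using ipYY[OF Gs, of d "transpose V"] by (simp add: W_def)
  have q2: "ip (d ** transpose V) (d ** transpose V) = ip (d ** W) d"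
    using ipYY[of "mat 1" d "transpose V"] by (simp add: W_def)
  have quad: "ip (G ** (d ** transpose V)) (d ** transpose V) + lam * ip (d ** transpose V) (d ** transpose V)
      = ip (M ** d ** W) d"
    by (simp add: q1 q2 M_def mm_add_r mm_scale_l ip_add_l ip_scale_l)
  have key: "ip (M ** d ** W) d \<le> (\<Sum>a\<in>UNIV. \<Sum>i\<in>UNIV. (d$a$i)^2 * Dn$a$i / U$a$i)"
    using key_mat[OF Mn Wn Ms Ws U0, of d] dz by (simp add: Dn_eq)
  have fin: "2 * ip (Dn - Nm) d + (\<Sum>a\<in>UNIV. \<Sum>i\<in>UNIV. (d$a$i)^2 * Dn$a$i / U$a$i) \<le> 0"
  proof -
    have "2 * ip (Dn - Nm) d + (\<Sum>a\<in>UNIV. \<Sum>i\<in>UNIV. (d$a$i)^2 * Dn$a$i / U$a$i)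
       = (\<Sum>a\<in>UNIV. \<Sum>i\<in>UNIV. 2 * ((Dn$a$i - Nm$a$i) * d$a$i) + (d$a$i)^2 * Dn$a$i / U$a$i)"
      by (simp add: ip_def sum.distrib sum_distrib_left)
    also have "\<dots> \<le> 0"
      unfolding de by (intro sum_nonpos arith_upd Dp) (use U0 in \<open>auto simp: nonneg_mat_def\<close>)
    finally show ?thesis .
  qed
  have "objective A X lam sig U' V \<le> objective A X lam sig U V"
    using obj lin quad key fin by linarith
  then show ?thesis using U'n by (simp add: U'_def)
qed



lemma V_part:
  fixes X :: "real^'n^'m" and A :: "real^'m^'k"
    and U :: "real^'r^'m" and V :: "real^'r^'n"
    and lam sig :: real
  assumes X0: "nonneg_mat X" and l0: "0 \<le> lam"
    and Gnn: "nonneg_mat (Gm A sig)"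
    and U0: "nonneg_mat U" and V0: "nonneg_mat V"
    and pd: "pos_mat (V_den A X lam sig U V)"
  shows "objective A X lam sig U (V_update A X lam sig U V) \<le> objective A X lam sig U V
            \<and> nonneg_mat (V_update A X lam sig U V)"
proof -
  define G where "G = Gm A sig"
  define Dn where "Dn = V_den A X lam sig U V"
  define Nm where "Nm = V_num A X lam sig U V"
  define V' where "V' = V_update A X lam sig U V"
  define d where "d = V' - V"
  define M where "M = G + lam *\<^sub>R mat 1"
  define W where "W = transpose U ** M ** U"
  define Z where "Z = U ** transpose V"
  have Gs: "transpose G = G" by (simp add: G_def Gm_sym)
  have Gn: "nonneg_mat G" using Gnn by (simp add: G_def)
  have Mn: "nonneg_mat M" using Gn l0 by (simp add: M_def nonneg_mat_def mat_def)
  have Ms: "transpose M = M" by (simp add: M_def tr_add transpose_scalar Gs)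
  have Wn: "nonneg_mat W" by (simp add: W_def nn_mm nn_tr U0 Mn)
  have Ws: "transpose W = W" by (simp add: W_def matrix_transpose_mul Ms matrix_mul_assoc)
  have Nm_eq: "Nm = transpose X ** G ** U"
    by (simp add: Nm_def V_num_def G_def Gm_def matrix_add_ldistrib mm_add_r mm_scale_l mm_scale_r matrix_mul_assoc)
  have Dn_eq: "Dn = mat 1 ** V ** W"
    by (simp add: Dn_def V_den_def M_def G_def Gm_def W_def matrix_add_ldistrib mm_add_r mm_scale_l mm_scale_r matrix_mul_assoc)
  have Nn: "nonneg_mat Nm" by (simp add: Nm_eq nn_mm nn_tr Gn X0 U0)
  have V'e: "V'$a$i = V$a$i * (Nm$a$i / Dn$a$i)" for a i
    by (simp add: V'_def V_update_def had_def ediv_def Nm_def Dn_def)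
  have de: "d$a$i = V$a$i * (Nm$a$i / Dn$a$i) - V$a$i" for a i
    by (simp add: d_def V'e)
  have Dp: "Dn$a$i > 0" for a i using pd by (simp add: Dn_def pos_mat_def)
  have V'n: "nonneg_mat V'"
    using V0 Nn Dp unfolding nonneg_mat_def V'e by (meson divide_nonneg_pos mult_nonneg_nonneg)
  have dz: "V$a$i = 0 \<Longrightarrow> d$a$i = 0" for a i by (simp add: de)
  have UV: "U ** transpose V' = Z + U ** transpose d"
    by (simp add: d_def Z_def tr_add[symmetric] matrix_add_ldistrib[symmetric])
  have obj: "objective A X lam sig U V' = objective A X lam sig U V
      + 2 * ip (G ** Z + lam *\<^sub>R Z - G ** X) (U ** transpose d)
      + (ip (G ** (U ** transpose d)) (U ** transpose d) + lam * ip (U ** transpose d) (U ** transpose d))"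
    unfolding obj_eq UV G_def[symmetric] Z_def[symmetric] quad_expand[OF Gs] by simp
  have PU: "transpose (G ** Z + lam *\<^sub>R Z - G ** X) ** U = Dn - Nm"
    by (simp add: Dn_eq Nm_eq M_def W_def Z_def tr_add tr_diff transpose_scalar matrix_transpose_mul Gs
        mm_add_r mm_diff_r mm_scale_l matrix_add_ldistrib mm_scale_r matrix_mul_assoc)
  have lin: "ip (G ** Z + lam *\<^sub>R Z - G ** X) (U ** transpose d) = ip (Dn - Nm) d"
  proof -
    let ?P = "G ** Z + lam *\<^sub>R Z - G ** X"
    have "ip ?P (U ** transpose d) = ip (U ** transpose d) ?P" by (rule ip_comm)
    also have "\<dots> = ip (transpose d) (transpose U ** ?P)" by (rule ip_mm_l)
    also have "\<dots> = ip (transpose (transpose d)) (transpose (transpose U ** ?P))" by (rule ip_tr[symmetric])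
    also have "\<dots> = ip d (Dn - Nm)" by (simp add: matrix_transpose_mul PU)
    finally show ?thesis by (simp add: ip_comm)
  qed
  have q1: "ip (G ** (U ** transpose d)) (U ** transpose d) = ip (d ** (transpose U ** G ** U)) d"
    by (rule ipYY2[OF Gs])
  have q2: "ip (U ** transpose d) (U ** transpose d) = ip (d ** (transpose U ** U)) d"
    using ipYY2[of "mat 1" U d] by simp
  have quad: "ip (G ** (U ** transpose d)) (U ** transpose d) + lam * ip (U ** transpose d) (U ** transpose d)
      = ip (mat 1 ** d ** W) d"
    by (simp add: q1 q2 W_def M_def matrix_add_ldistrib mm_add_r mm_scale_l mm_scale_r ip_add_l ip_scale_l)
  have key: "ip (mat 1 ** d ** W) d \<le> (\<Sum>a\<in>UNIV. \<Sum>i\<in>UNIV. (d$a$i)^2 * Dn$a$i / V$a$i)"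
    using key_mat[OF nn_mat1 Wn transpose_mat Ws V0, of d] dz by (simp add: Dn_eq)
  have fin: "2 * ip (Dn - Nm) d + (\<Sum>a\<in>UNIV. \<Sum>i\<in>UNIV. (d$a$i)^2 * Dn$a$i / V$a$i) \<le> 0"
  proof -
    have "2 * ip (Dn - Nm) d + (\<Sum>a\<in>UNIV. \<Sum>i\<in>UNIV. (d$a$i)^2 * Dn$a$i / V$a$i)
       = (\<Sum>a\<in>UNIV. \<Sum>i\<in>UNIV. 2 * ((Dn$a$i - Nm$a$i) * d$a$i) + (d$a$i)^2 * Dn$a$i / V$a$i)"
      by (simp add: ip_def sum.distrib sum_distrib_left)
    also have "\<dots> \<le> 0"
      unfolding de by (intro sum_nonpos arith_upd Dp) (use V0 in \<open>auto simp: nonneg_mat_def\<close>)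
    finally show ?thesis .
  qed
  have "objective A X lam sig U V' \<le> objective A X lam sig U V"
    using obj lin quad key fin by linarith
  then show ?thesis using V'n by (simp add: V'_def)
qed


theorem mainTheorem10:
  fixes X :: "real^'n^'m" and A :: "real^'m^'k"
    and U :: "real^'r^'m" and V :: "real^'r^'n"
    and lam sig :: real
  assumes "nonneg_mat X"
    and "0 \<le> lam" and "lam \<le> 1"
    and "sig \<ge> Max ((\<lambda>(a, b). negpart ((transpose A ** A) $ a $ b)) ` UNIV)"
    and "nonneg_mat U" and "nonneg_mat V"
  shows "(pos_mat (U_den A X lam sig U V) \<longrightarrow>
            objective A X lam sig (U_update A X lam sig U V) V \<le> objective A X lam sig U V
            \<and> nonneg_mat (U_update A X lam sig U V))
       \<and> (pos_mat (V_den A X lam sig U V) \<longrightarrow>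
            objective A X lam sig U (V_update A X lam sig U V) \<le> objective A X lam sig U V
            \<and> nonneg_mat (V_update A X lam sig U V))"
  proof -
  have G: "nonneg_mat (Gm A sig)" "sig \<ge> 0" using common_facts[OF assms(4)] by auto
  show ?thesis
    using U_part[OF assms(1) assms(2) G(1) assms(5) assms(6)]
          V_part[OF assms(1) assms(2) G(1) assms(5) assms(6)] by blast
qed

end
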